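(* Let $K\subseteq L$ be differential fields, $r\in\mathbb{N}$, and suppose $K$ is not algebraically closed, the constant field $C$ of $K$ is not all of $K$, and $K$ is weakly $r$-differentially closed in $L$. Let $m\ge1$ and let $Q_1,\dots,Q_m\in K\{Y\}$ be nonzero differential polynomials of order $\le r$ having a common zero in $L$. Then $Q_1,\dots,Q_m$ have a common zero in $K$.
   Context: Differential fields have characteristic $0$. $K$ is weakly $r$-differentially closed in $L$ if every nonzero $P\in K\{Y\}$ of order $\le r$ having a zero in $L$ has a zero in $K$. *)

theory Defs
  imports Main "HOL-Library.Poly_Mapping" "HOL-Computational_Algebra.Polynomial"
begin

definition derivation :: "('a::field \<Rightarrow> 'a) \<Rightarrow> bool" where
  "derivation D \<longleftrightarrow> (\<forall>x y. D (x + y) = D x + D y) \<and> (\<forall>x y. D (x * y) = x * D y + D x * y)"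

definition diff_subfield :: "('a::field \<Rightarrow> 'a) \<Rightarrow> 'a set \<Rightarrow> bool" where
  "diff_subfield D K \<longleftrightarrow> 0 \<in> K \<and> 1 \<in> K \<and>
     (\<forall>x\<in>K. \<forall>y\<in>K. x + y \<in> K \<and> x * y \<in> K) \<and>
     (\<forall>x\<in>K. - x \<in> K \<and> inverse x \<in> K \<and> D x \<in> K)"

text \<open>Differential polynomials in one differential indeterminate Y: ordinary polynomials
  in the variables Y, Y', Y'', ...; variable i stands for Y^(i).\<close>
type_synonym 'a dpoly = "(nat \<Rightarrow>\<^sub>0 nat) \<Rightarrow>\<^sub>0 'a"

definition mono_eval :: "('a::field \<Rightarrow> 'a) \<Rightarrow> (nat \<Rightarrow>\<^sub>0 nat) \<Rightarrow> 'a \<Rightarrow> 'a" where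
  "mono_eval D mon y = (\<Prod>i\<in>Poly_Mapping.keys mon. ((D ^^ i) y) ^ (Poly_Mapping.lookup mon i))"

definition dpoly_eval :: "('a::field \<Rightarrow> 'a) \<Rightarrow> 'a dpoly \<Rightarrow> 'a \<Rightarrow> 'a" where
  "dpoly_eval D P y = (\<Sum>mon\<in>Poly_Mapping.keys P. Poly_Mapping.lookup P mon * mono_eval D mon y)"

definition dpoly_coeffs_in :: "'a::zero set \<Rightarrow> 'a dpoly \<Rightarrow> bool" where
  "dpoly_coeffs_in K P \<longleftrightarrow> (\<forall>m\<in>Poly_Mapping.keys P. Poly_Mapping.lookup P m \<in> K)"

definition dpoly_order_le :: "nat \<Rightarrow> 'a::zero dpoly \<Rightarrow> bool" where
  "dpoly_order_le r P \<longleftrightarrow> (\<forall>m\<in>Poly_Mapping.keys P. \<forall>i\<in>Poly_Mapping.keys m. i \<le> r)"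

text \<open>K is weakly r-differentially closed in L (L = the whole type).\<close>
definition weakly_r_diff_closed :: "('a::field \<Rightarrow> 'a) \<Rightarrow> nat \<Rightarrow> 'a set \<Rightarrow> bool" where
  "weakly_r_diff_closed D r K \<longleftrightarrow>
     (\<forall>P. P \<noteq> 0 \<and> dpoly_coeffs_in K P \<and> dpoly_order_le r P \<and> (\<exists>y. dpoly_eval D P y = 0)
          \<longrightarrow> (\<exists>y\<in>K. dpoly_eval D P y = 0))"

definition alg_closed_subfield :: "'a::field set \<Rightarrow> bool" where
  "alg_closed_subfield K \<longleftrightarrow>
     (\<forall>p. (\<forall>i. coeff p i \<in> K) \<and> degree p \<ge> 1 \<longrightarrow> (\<exists>x\<in>K. poly p x = 0))"

end

theory Submission
  imports Defs
begin

lemma mono_eval_superset: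
  assumes "finite S" "Poly_Mapping.keys mon \<subseteq> S"
  shows "mono_eval D mon y = (\<Prod>i\<in>S. ((D ^^ i) y) ^ (Poly_Mapping.lookup mon i))"
  unfolding mono_eval_def
  by (rule prod.mono_neutral_left) (use assms in \<open>auto simp: in_keys_iff\<close>)

lemma mono_eval_zero [simp]: "mono_eval D 0 y = 1"
  by (simp add: mono_eval_def)

lemma mono_eval_add: "mono_eval D (m1 + m2) y = mono_eval D m1 y * mono_eval D m2 y"
proof -
  let ?S = "Poly_Mapping.keys m1 \<union> Poly_Mapping.keys m2"
  have f: "finite ?S" by simp
  have "mono_eval D (m1 + m2) y = (\<Prod>i\<in>?S. ((D ^^ i) y) ^ (Poly_Mapping.lookup (m1+m2) i))"
    by (rule mono_eval_superset[OF f]) (simp add: keys_add)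
  also have "\<dots> = (\<Prod>i\<in>?S. ((D ^^ i) y) ^ (Poly_Mapping.lookup m1 i) * ((D ^^ i) y) ^ (Poly_Mapping.lookup m2 i))"
    by (simp add: lookup_add power_add)
  also have "\<dots> = mono_eval D m1 y * mono_eval D m2 y"
    by (simp add: prod.distrib mono_eval_superset[OF f])
  finally show ?thesis .
qed

lemma eval_superset:
  assumes "finite S" "Poly_Mapping.keys P \<subseteq> S"
  shows "dpoly_eval D P y = (\<Sum>k\<in>S. Poly_Mapping.lookup P k * mono_eval D k y)"
  unfolding dpoly_eval_def
  by (rule sum.mono_neutral_left) (use assms in \<open>auto simp: in_keys_iff\<close>)

lemma eval_zero [simp]: "dpoly_eval D 0 y = 0"
  by (simp add: dpoly_eval_def)

lemma eval_add: "dpoly_eval D (P + Q) y = dpoly_eval D P y + dpoly_eval D Q y"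
proof -
  let ?S = "Poly_Mapping.keys P \<union> Poly_Mapping.keys Q"
  have f: "finite ?S" by simp
  show ?thesis
    by (simp add: eval_superset[OF f] keys_add lookup_add distrib_right sum.distrib)
qed

lemma eval_single: "dpoly_eval D (Poly_Mapping.single k a) y = a * mono_eval D k y"
  by (simp add: eval_superset[of "{k}"])

lemma eval_sum: "dpoly_eval D (sum f I) y = (\<Sum>i\<in>I. dpoly_eval D (f i) y)"
  by (induction I rule: infinite_finite_induct) (auto simp: eval_add)

lemma pm_expansion:
  assumes "finite S" "Poly_Mapping.keys P \<subseteq> S"
  shows "P = (\<Sum>k\<in>S. Poly_Mapping.single k (Poly_Mapping.lookup P k))"
proof (rule poly_mapping_eqI)
  fix j
  have "Poly_Mapping.lookup (\<Sum>k\<in>S. Poly_Mapping.single k (Poly_Mapping.lookup P k)) j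
       = (\<Sum>k\<in>S. Poly_Mapping.lookup P k when k = j)"
    by (simp add: lookup_sum lookup_single)
  also have "\<dots> = Poly_Mapping.lookup P j"
    using assms by (auto simp: when_def in_keys_iff)
  finally show "Poly_Mapping.lookup P j = Poly_Mapping.lookup (\<Sum>k\<in>S. Poly_Mapping.single k (Poly_Mapping.lookup P k)) j" by simp
qed

lemma pm_mult_expansion:
  "P * Q = (\<Sum>k\<in>Poly_Mapping.keys P. \<Sum>l\<in>Poly_Mapping.keys Q.
      Poly_Mapping.single (k + l) (Poly_Mapping.lookup P k * Poly_Mapping.lookup Q l))"
proof -
  have "P * Q = (\<Sum>k\<in>Poly_Mapping.keys P. Poly_Mapping.single k (Poly_Mapping.lookup P k)) *
     (\<Sum>l\<in>Poly_Mapping.keys Q. Poly_Mapping.single l (Poly_Mapping.lookup Q l))"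
    by (metis pm_expansion finite_keys order_refl)
  also have "\<dots> = (\<Sum>k\<in>Poly_Mapping.keys P. \<Sum>l\<in>Poly_Mapping.keys Q.
      Poly_Mapping.single (k + l) (Poly_Mapping.lookup P k * Poly_Mapping.lookup Q l))"
    by (simp add: sum_product mult_single)
  finally show ?thesis .
qed

lemma eval_mult: "dpoly_eval D (P * Q) y = dpoly_eval D P y * dpoly_eval D Q y"
proof -
  have "dpoly_eval D (P * Q) y = (\<Sum>k\<in>Poly_Mapping.keys P. \<Sum>l\<in>Poly_Mapping.keys Q.
      (Poly_Mapping.lookup P k * mono_eval D k y) * (Poly_Mapping.lookup Q l * mono_eval D l y))"
    by (simp only: pm_mult_expansion eval_sum eval_single mono_eval_add mult_ac)
  also have "\<dots> = dpoly_eval D P y * dpoly_eval D Q y"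
    by (simp add: dpoly_eval_def sum_product)
  finally show ?thesis .
qed

lemma eval_one [simp]: "dpoly_eval D 1 y = 1"
  by (metis eval_single mono_eval_zero mult_1 single_one)

lemma eval_power: "dpoly_eval D (P ^ n) y = dpoly_eval D P y ^ n"
  by (induction n) (simp_all add: eval_mult)

context
  fixes D :: "'a::field \<Rightarrow> 'a" and K :: "'a set"
  assumes sf: "diff_subfield D K"
begin

lemma K0: "0 \<in> K" and K1: "1 \<in> K"
  and Kadd: "x \<in> K \<Longrightarrow> y \<in> K \<Longrightarrow> x + y \<in> K"
  and Kmult: "x \<in> K \<Longrightarrow> y \<in> K \<Longrightarrow> x * y \<in> K"
  and Kinv: "x \<in> K \<Longrightarrow> inverse x \<in> K"
  and KD: "x \<in> K \<Longrightarrow> D x \<in> K"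
  using sf by (auto simp: diff_subfield_def)

lemma Ksum: "(\<And>i. i \<in> I \<Longrightarrow> f i \<in> K) \<Longrightarrow> sum f I \<in> K"
  by (induction I rule: infinite_finite_induct) (simp_all add: K0 Kadd)

lemma Kprod: "(\<And>i. i \<in> I \<Longrightarrow> f i \<in> K) \<Longrightarrow> prod f I \<in> K"
  by (induction I rule: infinite_finite_induct) (simp_all add: K1 Kmult)

lemma Kpow: "x \<in> K \<Longrightarrow> x ^ n \<in> K"
  by (induction n) (simp_all add: K1 Kmult)

lemma Kdiv: "x \<in> K \<Longrightarrow> y \<in> K \<Longrightarrow> x / y \<in> K"
  by (simp add: divide_inverse Kmult Kinv)

lemma KDn: "x \<in> K \<Longrightarrow> (D ^^ n) x \<in> K"
  by (induction n) (simp_all add: KD)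

lemma mono_eval_K: "y \<in> K \<Longrightarrow> mono_eval D mon y \<in> K"
  unfolding mono_eval_def by (rule Kprod, rule Kpow, rule KDn)

lemma eval_K: "y \<in> K \<Longrightarrow> dpoly_coeffs_in K P \<Longrightarrow> dpoly_eval D P y \<in> K"
  unfolding dpoly_eval_def dpoly_coeffs_in_def by (rule Ksum, rule Kmult) (auto simp: mono_eval_K)

lemma ci_zero: "dpoly_coeffs_in K 0"
  by (simp add: dpoly_coeffs_in_def)

lemma ci_single: "c \<in> K \<Longrightarrow> dpoly_coeffs_in K (Poly_Mapping.single k c)"
  by (simp add: dpoly_coeffs_in_def)

lemma ci_add: "dpoly_coeffs_in K P \<Longrightarrow> dpoly_coeffs_in K Q \<Longrightarrow> dpoly_coeffs_in K (P + Q)"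
  unfolding dpoly_coeffs_in_def
proof
  fix m assume P: "\<forall>m\<in>Poly_Mapping.keys P. Poly_Mapping.lookup P m \<in> K"
    and Q: "\<forall>m\<in>Poly_Mapping.keys Q. Poly_Mapping.lookup Q m \<in> K"
  have "Poly_Mapping.lookup P m \<in> K" using P K0 by (cases "m \<in> Poly_Mapping.keys P") (auto simp: in_keys_iff)
  moreover have "Poly_Mapping.lookup Q m \<in> K" using Q K0 by (cases "m \<in> Poly_Mapping.keys Q") (auto simp: in_keys_iff)
  ultimately show "Poly_Mapping.lookup (P + Q) m \<in> K" by (simp add: lookup_add Kadd)
qed

lemma ci_sum: "(\<And>i. i \<in> I \<Longrightarrow> dpoly_coeffs_in K (f i)) \<Longrightarrow> dpoly_coeffs_in K (sum f I)"
  by (induction I rule: infinite_finite_induct) (simp_all add: ci_zero ci_add)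

lemma ci_mult: "dpoly_coeffs_in K P \<Longrightarrow> dpoly_coeffs_in K Q \<Longrightarrow> dpoly_coeffs_in K (P * Q)"
  unfolding pm_mult_expansion[of P Q]
  by (rule ci_sum, rule ci_sum, rule ci_single, rule Kmult) (auto simp: dpoly_coeffs_in_def)

lemma ci_one: "dpoly_coeffs_in K 1"
  by (metis ci_single K1 single_one)

lemma ci_pow: "dpoly_coeffs_in K P \<Longrightarrow> dpoly_coeffs_in K (P ^ n)"
  by (induction n) (simp_all add: ci_one ci_mult)

end

lemma ol_zero: "dpoly_order_le r 0"
  by (simp add: dpoly_order_le_def)

lemma ol_single0: "dpoly_order_le r (Poly_Mapping.single 0 c)"
  by (simp add: dpoly_order_le_def)

lemma ol_add: "dpoly_order_le r P \<Longrightarrow> dpoly_order_le r Q \<Longrightarrow> dpoly_order_le r (P + Q)"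
  unfolding dpoly_order_le_def
proof (intro ballI)
  fix m i assume "\<forall>m\<in>Poly_Mapping.keys P. \<forall>i\<in>Poly_Mapping.keys m. i \<le> r"
    "\<forall>m\<in>Poly_Mapping.keys Q. \<forall>i\<in>Poly_Mapping.keys m. i \<le> r"
    "m \<in> Poly_Mapping.keys (P + Q)" "i \<in> Poly_Mapping.keys m"
  moreover have "m \<in> Poly_Mapping.keys P \<union> Poly_Mapping.keys Q" using keys_add[of P Q] \<open>m \<in> Poly_Mapping.keys (P + Q)\<close> by blast
  ultimately show "i \<le> r" by blast
qed

lemma ol_sum: "(\<And>i. i \<in> I \<Longrightarrow> dpoly_order_le r (f i)) \<Longrightarrow> dpoly_order_le r (sum f I)"
  by (induction I rule: infinite_finite_induct) (simp_all add: ol_zero ol_add)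

lemma ol_mult: "dpoly_order_le r P \<Longrightarrow> dpoly_order_le r Q \<Longrightarrow> dpoly_order_le r (P * Q)"
  unfolding dpoly_order_le_def
proof (intro ballI)
  fix m i
  assume P: "\<forall>m\<in>Poly_Mapping.keys P. \<forall>i\<in>Poly_Mapping.keys m. i \<le> r"
    and Q: "\<forall>m\<in>Poly_Mapping.keys Q. \<forall>i\<in>Poly_Mapping.keys m. i \<le> r"
    and m: "m \<in> Poly_Mapping.keys (P * Q)" and i: "i \<in> Poly_Mapping.keys m"
  have "m \<in> {a + b | a b. a \<in> Poly_Mapping.keys P \<and> b \<in> Poly_Mapping.keys Q}"
    using keys_mult[of P Q] m by blast
  then obtain a b where "m = a + b" "a \<in> Poly_Mapping.keys P" "b \<in> Poly_Mapping.keys Q"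
    by blast
  then have "i \<in> Poly_Mapping.keys a \<union> Poly_Mapping.keys b" using i keys_add[of a b] by blast
  with P Q \<open>a \<in> _\<close> \<open>b \<in> _\<close> show "i \<le> r" by blast
qed

lemma ol_one: "dpoly_order_le r 1"
  by (simp add: dpoly_order_le_def)

lemma ol_pow: "dpoly_order_le r P \<Longrightarrow> dpoly_order_le r (P ^ n)"
  by (induction n) (simp_all add: ol_one ol_mult)


lemma zero_le_mon: "(0::nat \<Rightarrow>\<^sub>0 nat) \<le> k"
proof (cases "k = 0")
  case False
  then obtain j where j: "Poly_Mapping.lookup k j \<noteq> 0"
    by (metis poly_mapping_eqI lookup_zero)
  define i where "i = (LEAST j. Poly_Mapping.lookup k j \<noteq> 0)"
  have i1: "Poly_Mapping.lookup k i \<noteq> 0" unfolding i_def by (rule LeastI[of "\<lambda>j. Poly_Mapping.lookup k j \<noteq> 0", OF j])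
  have i2: "\<forall>j<i. Poly_Mapping.lookup k j = 0" unfolding i_def using not_less_Least by blast
  have "less_fun (Poly_Mapping.lookup 0) (Poly_Mapping.lookup k)"
    unfolding less_fun_def using i1 i2 by (intro exI[of _ i]) auto
  then show ?thesis by (simp add: less_eq_poly_mapping.rep_eq)
qed simp

definition lm :: "'a::zero dpoly \<Rightarrow> (nat \<Rightarrow>\<^sub>0 nat)" where
  "lm P = Max (Poly_Mapping.keys P)"

lemma lm_in_keys: "P \<noteq> 0 \<Longrightarrow> lm P \<in> Poly_Mapping.keys P"
  unfolding lm_def by (rule Max_in) auto

lemma key_le_lm: "k \<in> Poly_Mapping.keys P \<Longrightarrow> k \<le> lm P"
  unfolding lm_def by (rule Max_ge) auto

lemma lm_eqI: "\<mu> \<in> Poly_Mapping.keys P \<Longrightarrow> (\<And>k. k \<in> Poly_Mapping.keys P \<Longrightarrow> k \<le> \<mu>) \<Longrightarrow> lm P = \<mu>"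
  unfolding lm_def by (rule Max_eqI) auto

lemma lookup_beyond_lm: "lm P < k \<Longrightarrow> Poly_Mapping.lookup P k = 0"
  using key_le_lm[of k P] by (metis in_keys_iff not_le)

lemma lm_mult:
  fixes P Q :: "'a::field dpoly"
  assumes "P \<noteq> 0" "Q \<noteq> 0"
  shows "Poly_Mapping.lookup (P * Q) (lm P + lm Q) = Poly_Mapping.lookup P (lm P) * Poly_Mapping.lookup Q (lm Q)"
    and "lm (P * Q) = lm P + lm Q"
proof -
  let ?\<mu> = "lm P + lm Q"
  have iff: "k + l = ?\<mu> \<longleftrightarrow> k = lm P \<and> l = lm Q"
    if k: "k \<in> Poly_Mapping.keys P" and l: "l \<in> Poly_Mapping.keys Q" for k l
  proof
    assume e: "k + l = ?\<mu>"
    have kl: "k \<le> lm P" "l \<le> lm Q" using key_le_lm k l by auto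
    show "k = lm P \<and> l = lm Q"
    proof (rule ccontr)
      assume "\<not> (k = lm P \<and> l = lm Q)"
      then have "k < lm P \<or> l < lm Q" using kl by auto
      then have "k + l < ?\<mu>"
        using kl by (metis add_less_le_mono add_le_less_mono)
      then show False using e by simp
    qed
  qed auto
  have "Poly_Mapping.lookup (P * Q) ?\<mu> = (\<Sum>k\<in>Poly_Mapping.keys P. \<Sum>l\<in>Poly_Mapping.keys Q.
      (if k = lm P \<and> l = lm Q then Poly_Mapping.lookup P k * Poly_Mapping.lookup Q l else 0))"
    unfolding pm_mult_expansion[of P Q] lookup_sum lookup_single
    by (intro sum.cong refl) (auto simp: when_def iff)
  also have "\<dots> = (\<Sum>k\<in>Poly_Mapping.keys P. if k = lm P then Poly_Mapping.lookup P k * Poly_Mapping.lookup Q (lm Q) else 0)"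
    by (intro sum.cong refl) (auto simp: lm_in_keys assms)
  also have "\<dots> = Poly_Mapping.lookup P (lm P) * Poly_Mapping.lookup Q (lm Q)"
    by (simp add: lm_in_keys assms)
  finally show 1: "Poly_Mapping.lookup (P * Q) ?\<mu> = Poly_Mapping.lookup P (lm P) * Poly_Mapping.lookup Q (lm Q)" .
  show "lm (P * Q) = ?\<mu>"
  proof (rule lm_eqI)
    show "?\<mu> \<in> Poly_Mapping.keys (P * Q)"
      using 1 lm_in_keys[OF assms(1)] lm_in_keys[OF assms(2)] by (simp add: in_keys_iff)
    fix k assume "k \<in> Poly_Mapping.keys (P * Q)"
    then have "k \<in> {a + b | a b. a \<in> Poly_Mapping.keys P \<and> b \<in> Poly_Mapping.keys Q}"
      using keys_mult[of P Q] by blast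
    then show "k \<le> ?\<mu>" using key_le_lm by (auto intro!: add_mono)
  qed
qed


lemma sum_distinct_lm_nonzero:
  fixes F :: "nat \<Rightarrow> 'a::field dpoly"
  assumes fin: "finite I" and ne: "I \<noteq> {}" and nz: "\<forall>i\<in>I. F i \<noteq> 0"
    and inj: "inj_on (\<lambda>i. lm (F i)) I"
  shows "sum F I \<noteq> 0"
proof -
  define \<mu> where "\<mu> = Max ((\<lambda>i. lm (F i)) ` I)"
  have "\<mu> \<in> (\<lambda>i. lm (F i)) ` I" unfolding \<mu>_def using fin ne by (intro Max_in) auto
  then obtain i0 where i0: "i0 \<in> I" "lm (F i0) = \<mu>" by auto
  have le: "lm (F i) \<le> \<mu>" if "i \<in> I" for i unfolding \<mu>_def using fin that by (intro Max_ge) auto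
  have "Poly_Mapping.lookup (sum F I) \<mu> = (\<Sum>i\<in>I. Poly_Mapping.lookup (F i) \<mu>)"
    by (simp add: lookup_sum)
  also have "\<dots> = Poly_Mapping.lookup (F i0) \<mu>"
  proof -
    have "(\<Sum>i\<in>I. Poly_Mapping.lookup (F i) \<mu>) = Poly_Mapping.lookup (F i0) \<mu> + (\<Sum>i\<in>I - {i0}. Poly_Mapping.lookup (F i) \<mu>)"
      using fin i0(1) by (rule sum.remove)
    moreover have "(\<Sum>i\<in>I - {i0}. Poly_Mapping.lookup (F i) \<mu>) = 0"
    proof (rule sum.neutral, rule ballI)
    fix i assume "i \<in> I - {i0}"
    then have i: "i \<in> I" "i \<noteq> i0" by auto
    then have "lm (F i) \<noteq> \<mu>" using inj i0 by (metis inj_onD)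
    then have "lm (F i) < \<mu>" using le[OF i(1)] by simp
    then show "Poly_Mapping.lookup (F i) \<mu> = 0" by (rule lookup_beyond_lm)
    qed
    ultimately show ?thesis by simp
  qed
  also have "\<dots> \<noteq> 0" using lm_in_keys[of "F i0"] nz i0 by (auto simp: in_keys_iff)
  finally show ?thesis by auto
qed

lemma chain_inj_up:
  fixes f :: "nat \<Rightarrow> 'b::linorder"
  assumes "\<forall>i<d. f i < f (Suc i)" shows "inj_on f {..d}"
proof -
  have lt: "f i < f j" if "i < j" "j \<le> d" for i j
    using that
  proof (induction j)
    case (Suc j)
    then show ?case using assms by (cases "i = j") (auto intro: less_trans)
  qed simp
  show ?thesis
    by (rule inj_onI) (metis atMost_iff lt linorder_neqE_nat order_less_irrefl)
qed

lemma chain_inj_down: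
  fixes f :: "nat \<Rightarrow> 'b::linorder"
  assumes "\<forall>i<d. f (Suc i) < f i" shows "inj_on f {..d}"
proof -
  have lt: "f j < f i" if "i < j" "j \<le> d" for i j
    using that
  proof (induction j)
    case (Suc j)
    have jd: "j < d" using Suc.prems by simp
    have "f (Suc j) < f j" using assms jd by simp
    moreover have "i = j \<or> f j < f i" using Suc by (metis less_SucE Suc_leD)
    ultimately show ?case by (auto intro: less_trans)
  qed simp
  show ?thesis
    by (rule inj_onI) (metis atMost_iff lt linorder_neqE_nat order_less_irrefl)
qed

lemma single_eq_0_iff [simp]: "Poly_Mapping.single k c = 0 \<longleftrightarrow> c = 0"
  by (metis lookup_single_eq lookup_zero single_zero)

definition hom :: "'a::field poly \<Rightarrow> 'a dpoly \<Rightarrow> 'a dpoly \<Rightarrow> 'a dpoly" where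
  "hom p a b = (\<Sum>i\<le>degree p. Poly_Mapping.single 0 (coeff p i) * a ^ i * b ^ (degree p - i))"

lemma eval_hom: "dpoly_eval D (hom p a b) y =
   (\<Sum>i\<le>degree p. coeff p i * dpoly_eval D a y ^ i * dpoly_eval D b y ^ (degree p - i))"
  by (simp add: hom_def eval_sum eval_mult eval_power eval_single)

lemma lm_single0: "c \<noteq> 0 \<Longrightarrow> lm (Poly_Mapping.single 0 c) = 0"
  by (rule lm_eqI) auto

lemma hom_nonzero:
  fixes a b :: "'a::field dpoly"
  assumes a: "a \<noteq> 0" and b: "b \<noteq> 0" and ab: "lm a \<noteq> lm b" and p: "p \<noteq> 0"
  shows "hom p a b \<noteq> 0"
proof -
  define d where "d = degree p"
  define T where "T i = a ^ i * b ^ (d - i)" for i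
  define F where "F i = Poly_Mapping.single 0 (coeff p i) * a ^ i * b ^ (d - i)" for i
  define I where "I = {i\<in>{..d}. coeff p i \<noteq> 0}"
  have Tnz: "T i \<noteq> 0" for i using a b by (simp add: T_def)
  have FT: "F i = Poly_Mapping.single 0 (coeff p i) * T i" for i by (simp add: F_def T_def mult.assoc)
  have lmF: "lm (F i) = lm (T i)" if "coeff p i \<noteq> 0" for i
  proof -
    have "Poly_Mapping.single 0 (coeff p i) \<noteq> 0" by (metis lookup_single_eq lookup_zero that)
    then show ?thesis using lm_mult(2)[of "Poly_Mapping.single 0 (coeff p i)" "T i"] that Tnz
      by (simp add: FT lm_single0)
  qed
  have step: "lm (T (Suc i)) + lm b = lm a + lm (T i)" if "i < d" for i
  proof -
    have "T (Suc i) * b = a * T i"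
      using that by (simp add: T_def Suc_diff_Suc power_Suc2[symmetric] mult_ac)
         (metis Suc_diff_Suc mult.commute power_Suc)
    then show ?thesis using lm_mult(2) Tnz a b by metis
  qed
  have inj: "inj_on (\<lambda>i. lm (T i)) {..d}"
  proof (cases "lm b < lm a")
    case True
    show ?thesis
    proof (rule chain_inj_up, intro allI impI)
      fix i assume "i < d"
      then have "lm b + lm (T i) < lm (T (Suc i)) + lm b"
        using step[of i] True by (metis add.commute add_strict_right_mono)
      then show "lm (T i) < lm (T (Suc i))"
        by (metis add.commute add_less_imp_less_left)
    qed
  next
    case False
    then have lt: "lm a < lm b" using ab by simp
    show ?thesis
    proof (rule chain_inj_down, intro allI impI)
      fix i assume "i < d"
      then have "lm (T (Suc i)) + lm b < lm b + lm (T i)"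
        using step[of i] lt by (metis add.commute add_strict_right_mono)
      then show "lm (T (Suc i)) < lm (T i)"
        by (metis add.commute add_less_imp_less_left)
    qed
  qed
  have "hom p a b = sum F {..d}" by (simp add: hom_def F_def d_def)
  also have "\<dots> = sum F I"
    by (rule sum.mono_neutral_right) (auto simp: I_def F_def)
  also have "\<dots> \<noteq> 0"
  proof (rule sum_distinct_lm_nonzero)
    show "finite I" by (simp add: I_def)
    show "I \<noteq> {}" using p by (auto simp: I_def d_def intro!: exI[of _ "degree p"])
    show "\<forall>i\<in>I. F i \<noteq> 0" using Tnz by (auto simp: I_def FT)
    show "inj_on (\<lambda>i. lm (F i)) I"
      using inj_on_subset[OF inj, of I] by (auto simp: I_def lmF inj_on_def)
  qed
  finally show ?thesis .
qed


lemma hom_zero_K: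
  fixes p :: "'a::field poly"
  assumes sf: "diff_subfield D K"
    and pK: "\<forall>i. coeff p i \<in> K" and deg: "degree p \<ge> 1" and nr: "\<forall>x\<in>K. poly p x \<noteq> 0"
    and u: "u \<in> K" and v: "v \<in> K"
    and z: "(\<Sum>i\<le>degree p. coeff p i * u ^ i * v ^ (degree p - i)) = 0"
  shows "u = 0 \<and> v = 0"
proof (cases "v = 0")
  case False
  have "(\<Sum>i\<le>degree p. coeff p i * u ^ i * v ^ (degree p - i))
      = (\<Sum>i\<le>degree p. v ^ degree p * (coeff p i * (u / v) ^ i))"
  proof (rule sum.cong[OF refl])
    fix i assume "i \<in> {..degree p}"
    then have "v ^ degree p = v ^ i * v ^ (degree p - i)" by (simp add: power_add[symmetric])
    then show "coeff p i * u ^ i * v ^ (degree p - i) = v ^ degree p * (coeff p i * (u / v) ^ i)"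
      using False by (simp add: power_divide field_simps)
  qed
  also have "\<dots> = v ^ degree p * poly p (u / v)"
    by (simp add: poly_altdef sum_distrib_left)
  finally have "poly p (u / v) = 0" using z False by simp
  moreover have "u / v \<in> K" using Kdiv[OF sf u v] .
  ultimately show ?thesis using nr by blast
next
  case True
  have "(\<Sum>i\<le>degree p. coeff p i * u ^ i * v ^ (degree p - i)) = coeff p (degree p) * u ^ degree p"
    using True by (subst sum.remove[of _ "degree p"]) (auto intro!: sum.neutral)
  moreover have "coeff p (degree p) \<noteq> 0" using deg by (metis leading_coeff_0_iff not_one_le_zero degree_0)
  ultimately show ?thesis using z True by simp
qed

lemma eval_hom_zero:
  assumes "dpoly_eval D a y = 0" "dpoly_eval D b y = 0" "degree p \<ge> 1"
  shows "dpoly_eval D (hom p a b) y = 0"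
  unfolding eval_hom assms(1,2)
proof (rule sum.neutral, rule ballI)
  fix i assume "i \<in> {..degree p}"
  then show "coeff p i * 0 ^ i * 0 ^ (degree p - i) = 0" using assms(3)
    by (cases i) auto
qed

lemma nonconst:
  fixes P :: "'a::field dpoly"
  assumes "P \<noteq> 0" "dpoly_eval D P y = 0"
  shows "lm P \<noteq> 0"
proof
  assume l: "lm P = 0"
  have "Poly_Mapping.keys P \<subseteq> {0}"
  proof
    fix k assume "k \<in> Poly_Mapping.keys P"
    then have "k \<le> 0" using key_le_lm l by metis
    then show "k \<in> {0}" using zero_le_mon[of k] by simp
  qed
  then have "dpoly_eval D P y = Poly_Mapping.lookup P 0"
    by (simp add: eval_superset[of "{0}"])
  moreover have "0 \<in> Poly_Mapping.keys P" using lm_in_keys[OF assms(1)] l by simp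
  ultimately show False using assms(2) by (simp add: in_keys_iff)
qed

lemma combine:
  fixes p :: "'a::field poly"
  assumes sf: "diff_subfield D K"
    and pK: "\<forall>i. coeff p i \<in> K" and deg: "degree p \<ge> 1" and nr: "\<forall>x\<in>K. poly p x \<noteq> 0"
    and Q1: "Q1 \<noteq> 0" "dpoly_coeffs_in K Q1" "dpoly_order_le r Q1"
    and Q2: "Q2 \<noteq> 0" "dpoly_coeffs_in K Q2" "dpoly_order_le r Q2"
    and z: "dpoly_eval D Q1 y0 = 0" "dpoly_eval D Q2 y0 = 0"
  shows "\<exists>P. P \<noteq> 0 \<and> dpoly_coeffs_in K P \<and> dpoly_order_le r P \<and> dpoly_eval D P y0 = 0 \<and>
     (\<forall>y\<in>K. dpoly_eval D P y = 0 \<longrightarrow> dpoly_eval D Q1 y = 0 \<and> dpoly_eval D Q2 y = 0)"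
proof -
  define a where "a = (if lm Q1 = lm Q2 then Q1 * Q1 else Q1)"
  have anz: "a \<noteq> 0" using Q1 by (simp add: a_def)
  have aci: "dpoly_coeffs_in K a" using Q1 ci_mult[OF sf] by (simp add: a_def)
  have aol: "dpoly_order_le r a" using Q1 ol_mult[of r Q1 Q1] by (simp add: a_def)
  have az: "dpoly_eval D a y = 0 \<longleftrightarrow> dpoly_eval D Q1 y = 0" for y
    by (simp add: a_def eval_mult)
  have l1: "lm Q1 \<noteq> 0" using nonconst Q1(1) z(1) by metis
  have lab: "lm a \<noteq> lm Q2"
  proof (cases "lm Q1 = lm Q2")
    case True
    then have "lm a = lm Q1 + lm Q1" using lm_mult(2)[OF Q1(1) Q1(1)] by (simp add: a_def)
    moreover have "lm Q1 + lm Q1 \<noteq> lm Q1 + 0" using l1 by (metis add_left_cancel)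
    ultimately show ?thesis using True by simp
  qed (simp add: a_def)
  define P where "P = hom p a Q2"
  have pnz: "p \<noteq> 0" using deg by auto
  show ?thesis
  proof (intro exI[of _ P] conjI)
    show "P \<noteq> 0" unfolding P_def by (rule hom_nonzero[OF anz Q2(1) lab pnz])
    show "dpoly_coeffs_in K P" unfolding P_def hom_def
      by (intro ci_sum[OF sf] ci_mult[OF sf] ci_single[OF sf] ci_pow[OF sf] aci Q2(2) pK[rule_format])
    show "dpoly_order_le r P" unfolding P_def hom_def
      by (intro ol_sum ol_mult ol_single0 ol_pow aol Q2(3))
    show "dpoly_eval D P y0 = 0" unfolding P_def
      by (rule eval_hom_zero[OF _ z(2) deg]) (simp add: az z(1))
    show "\<forall>y\<in>K. dpoly_eval D P y = 0 \<longrightarrow> dpoly_eval D Q1 y = 0 \<and> dpoly_eval D Q2 y = 0"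
    proof (intro ballI impI)
    fix y assume y: "y \<in> K" and "dpoly_eval D P y = 0"
    then have "(\<Sum>i\<le>degree p. coeff p i * dpoly_eval D a y ^ i * dpoly_eval D Q2 y ^ (degree p - i)) = 0"
      unfolding P_def eval_hom by simp
    then have "dpoly_eval D a y = 0 \<and> dpoly_eval D Q2 y = 0"
      using hom_zero_K[OF sf pK deg nr eval_K[OF sf y aci] eval_K[OF sf y Q2(2)]] by blast
    then show "dpoly_eval D Q1 y = 0 \<and> dpoly_eval D Q2 y = 0" using az by simp
    qed
  qed
qed

lemma main_aux:
  fixes p :: "'a::field poly"
  assumes sf: "diff_subfield D K"
    and pK: "\<forall>i. coeff p i \<in> K" and deg: "degree p \<ge> 1" and nr: "\<forall>x\<in>K. poly p x \<noteq> 0"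
    and wc: "weakly_r_diff_closed D r K"
  shows "(\<forall>j<Suc n. Q j \<noteq> 0 \<and> dpoly_coeffs_in K (Q j) \<and> dpoly_order_le r (Q j)) \<Longrightarrow>
     (\<forall>j<Suc n. dpoly_eval D (Q j) y0 = 0) \<Longrightarrow> \<exists>y\<in>K. \<forall>j<Suc n. dpoly_eval D (Q j) y = 0"
proof (induction n arbitrary: Q)
  case 0
  then have "\<exists>y\<in>K. dpoly_eval D (Q 0) y = 0"
    using wc unfolding weakly_r_diff_closed_def by blast
  then show ?case by auto
next
  case (Suc n)
  obtain P where P: "P \<noteq> 0" "dpoly_coeffs_in K P" "dpoly_order_le r P" "dpoly_eval D P y0 = 0"
    "\<forall>y\<in>K. dpoly_eval D P y = 0 \<longrightarrow> dpoly_eval D (Q n) y = 0 \<and> dpoly_eval D (Q (Suc n)) y = 0"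
    using combine[OF sf pK deg nr, of "Q n" r "Q (Suc n)" y0] Suc.prems by auto
  define Q' where "Q' j = (if j < n then Q j else P)" for j
  have "\<exists>y\<in>K. \<forall>j<Suc n. dpoly_eval D (Q' j) y = 0"
    by (rule Suc.IH) (use Suc.prems P in \<open>auto simp: Q'_def\<close>)
  then obtain y where y: "y \<in> K" "\<forall>j<Suc n. dpoly_eval D (Q' j) y = 0" by blast
  have "\<forall>j<Suc (Suc n). dpoly_eval D (Q j) y = 0"
  proof (intro allI impI)
    fix j assume j: "j < Suc (Suc n)"
    have Pz: "dpoly_eval D P y = 0" using y(2)[rule_format, of n] by (simp add: Q'_def)
    show "dpoly_eval D (Q j) y = 0"
    proof (cases "j < n")
      case True then show ?thesis using y(2)[rule_format, of j] by (simp add: Q'_def)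
    next
      case False
      then have "j = n \<or> j = Suc n" using j by auto
      then show ?thesis using P(5) y(1) Pz by auto
    qed
  qed
  then show ?case using y(1) by blast
qed

theorem mainTheorem18:
  fixes D :: "'a::field_char_0 \<Rightarrow> 'a" and K :: "'a set" and r m :: nat
    and Q :: "nat \<Rightarrow> 'a dpoly"
  assumes "derivation D"
    and "diff_subfield D K"
    and "\<not> alg_closed_subfield K"
    and "\<exists>x\<in>K. D x \<noteq> 0"
    and "weakly_r_diff_closed D r K"
    and "m \<ge> 1"
    and "\<forall>j<m. Q j \<noteq> 0 \<and> dpoly_coeffs_in K (Q j) \<and> dpoly_order_le r (Q j)"
    and "\<exists>y. \<forall>j<m. dpoly_eval D (Q j) y = 0"
  shows "\<exists>y\<in>K. \<forall>j<m. dpoly_eval D (Q j) y = 0"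
proof -
  obtain p :: "'a poly" where p: "\<forall>i. coeff p i \<in> K" "degree p \<ge> 1" "\<forall>x\<in>K. poly p x \<noteq> 0"
    using assms(3) unfolding alg_closed_subfield_def by blast
  obtain n where n: "m = Suc n" using assms(6) by (cases m) auto
  obtain y0 where y0: "\<forall>j<m. dpoly_eval D (Q j) y0 = 0" using assms(8) by blast
  show ?thesis
    using main_aux[OF assms(2) p assms(5), of n Q y0] assms(7) y0 n by simp
qed

end
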